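(* Let $X$ be a real random variable with distribution function $F$ and continuous density $f$, and let $h$ be its two-sided hazard function. Let $t\ge\xi_{1/2}$ with $\bar F(t)>0$, and let $X_t$ denote a random variable distributed as $X$ conditional on $X>t$. Then \[ \frac{1}{12\,\sup_{x\ge t}h(x)^2}\le \mathrm{Var}\,X_t\le\frac{4}{\inf_{x\ge t}h(x)^2}, \] where the supremum and infimum are over $x\ge t$ with $\bar F(x)>0$, and we use the conventions $1/\infty=0$ and $1/0=\infty$. The analogous statement holds for the left-hand tail: for $t<\xi_{1/2}$ with $F(t)>0$, with $X$ conditioned on $X<t$, and with $h$ taken over $x\le t$.
   Context: Let $\bar F(x)=\mathbb P(X>x)$, $F^{-1}(p)=\inf\{x:F(x)\ge p\}$ and $\xi_p=F^{-1}(p)$. The two-sided hazard function is $h(x)=f(x)/\bar F(x)$ for $x\ge\xi_{1/2}$ and $h(x)=f(x)/F(x)$ for $x<\xi_{1/2}$. *)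

theory Defs
  imports "HOL-Probability.Probability"
begin

definition cdf_rv :: "'a measure \<Rightarrow> ('a \<Rightarrow> real) \<Rightarrow> real \<Rightarrow> real" where
  "cdf_rv M X x = measure M {\<omega> \<in> space M. X \<omega> \<le> x}"

definition surv_rv :: "'a measure \<Rightarrow> ('a \<Rightarrow> real) \<Rightarrow> real \<Rightarrow> real" where
  "surv_rv M X x = measure M {\<omega> \<in> space M. X \<omega> > x}"

definition quantile_rv :: "'a measure \<Rightarrow> ('a \<Rightarrow> real) \<Rightarrow> real \<Rightarrow> real" where
  "quantile_rv M X p = Inf {x. p \<le> cdf_rv M X x}"

definition hazard2 :: "'a measure \<Rightarrow> ('a \<Rightarrow> real) \<Rightarrow> (real \<Rightarrow> real) \<Rightarrow> real \<Rightarrow> real" where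
  "hazard2 M X f x =
     (if x \<ge> quantile_rv M X (1/2) then f x / surv_rv M X x else f x / cdf_rv M X x)"

definition var_ext :: "'a measure \<Rightarrow> ('a \<Rightarrow> real) \<Rightarrow> ereal" where
  "var_ext N Y = (if integrable N (\<lambda>\<omega>. (Y \<omega>)\<^sup>2)
      then ereal (\<integral>\<omega>. (Y \<omega> - (\<integral>\<omega>'. Y \<omega>' \<partial>N))\<^sup>2 \<partial>N) else \<infinity>)"

end

theory Submission
  imports Defs
begin


lemma var_lower:
  fixes g :: "real \<Rightarrow> real" and b :: real
  assumes gm[measurable]: "g \<in> borel_measurable borel" and gnn: "\<And>x. 0 \<le> g x"
    and P: "prob_space (density lborel (\<lambda>x. ennreal (g x)))"
    and b: "0 < b" "\<And>x. g x \<le> b"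
  shows "ereal (1/(12*b\<^sup>2)) \<le> var_ext (density lborel (\<lambda>x. ennreal (g x))) (\<lambda>x. x)"
proof (cases "integrable (density lborel (\<lambda>x. ennreal (g x))) (\<lambda>x. x\<^sup>2)")
  case False then show ?thesis by (simp add: var_ext_def)
next
  case True
  define D where "D = density lborel (\<lambda>x. ennreal (g x))"
  interpret D: prob_space D using P by (simp add: D_def)
  have sq: "integrable D (\<lambda>x. x\<^sup>2)" using True by (simp add: D_def)
  have i1: "integrable D (\<lambda>x. x)"
    by (rule D.square_integrable_imp_integrable) (use sq in \<open>auto simp: D_def\<close>)
  define \<mu> where "\<mu> = (\<integral>x. x \<partial>D)"
  have eq: "(\<lambda>x. (x - \<mu>)\<^sup>2) = (\<lambda>x. x\<^sup>2 - 2*\<mu>*x + \<mu>\<^sup>2)"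
    by (auto simp: power2_eq_square algebra_simps)
  have i2: "integrable D (\<lambda>x. (x - \<mu>)\<^sup>2)"
    unfolding eq using sq i1 by auto
  have i2': "integrable lborel (\<lambda>x. g x * (x - \<mu>)\<^sup>2)"
    using i2 unfolding D_def by (subst (asm) integrable_density) (auto simp: gnn)
  have v: "(\<integral>x. (x - \<mu>)\<^sup>2 \<partial>D) = (\<integral>x. g x * (x - \<mu>)\<^sup>2 \<partial>lborel)"
    unfolding D_def by (subst integral_density) (auto simp: gnn)
  have ig: "integrable lborel g"
  proof -
    have "integrable D (\<lambda>x. 1::real)" by simp
    then show ?thesis unfolding D_def by (subst (asm) integrable_density) (auto simp: gnn)
  qed
  have g1: "(\<integral>x. g x \<partial>lborel) = 1"
  proof -
    have "(\<integral>x. 1 \<partial>D) = (1::real)" using D.prob_space by simp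
    then show ?thesis unfolding D_def by (subst (asm) integral_density) (auto simp: gnn)
  qed
  define r where "r = 1/(2*b)"
  have r: "0 < r" using b by (simp add: r_def)
  have h1: "has_bochner_integral lborel (\<lambda>x. (x - \<mu>)\<^sup>2 * indicator {\<mu>-r..\<mu>+r} x)
      ((\<mu>+r-\<mu>)^3/3 - (\<mu>-r-\<mu>)^3/3)"
    by (rule has_bochner_integral_FTC_Icc_real) (use r in \<open>auto intro!: derivative_eq_intros simp: power2_eq_square\<close>)
  have h2: "has_bochner_integral lborel (\<lambda>x. 1 * indicator {\<mu>-r..\<mu>+r} x) ((\<mu>+r) - (\<mu>-r))"
    by (rule has_bochner_integral_FTC_Icc_real) (use r in \<open>auto intro!: derivative_eq_intros\<close>)
  let ?Q = "\<lambda>x. b * ((x - \<mu>)\<^sup>2 * indicator {\<mu>-r..\<mu>+r} x) + r\<^sup>2 * g x - r\<^sup>2 * b * (1 * indicator {\<mu>-r..\<mu>+r} x)"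
  have h1i: "integrable lborel (\<lambda>x. (x - \<mu>)\<^sup>2 * indicator {\<mu>-r..\<mu>+r} x)"
    using h1 by (rule integrable.intros)
  have h2i: "integrable lborel (\<lambda>x. 1 * indicator {\<mu>-r..\<mu>+r} x :: real)"
    using h2 by (rule integrable.intros)
  have iQ: "integrable lborel ?Q"
  proof -
    have a: "integrable lborel (\<lambda>x. b * ((x - \<mu>)\<^sup>2 * indicator {\<mu>-r..\<mu>+r} x))"
      using h1i by (rule integrable_mult_right)
    have c: "integrable lborel (\<lambda>x. r\<^sup>2 * g x)"
      using ig by (rule integrable_mult_right)
    have d: "integrable lborel (\<lambda>x. r\<^sup>2 * b * (1 * indicator {\<mu>-r..\<mu>+r} x))"
      using h2i by (rule integrable_mult_right)
    show ?thesis by (rule Bochner_Integration.integrable_diff[OF Bochner_Integration.integrable_add[OF a c] d])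
  qed
  have Qv: "(\<integral>x. ?Q x \<partial>lborel) = b * (2*r^3/3) + r\<^sup>2 - r\<^sup>2 * b * (2*r)"
    using h1 h2 h1i h2i ig g1 r by (simp add: Bochner_Integration.integral_diff Bochner_Integration.integral_add has_bochner_integral_integral_eq)
  have Qle: "?Q x \<le> g x * (x - \<mu>)\<^sup>2" for x
  proof (cases "x \<in> {\<mu>-r..\<mu>+r}")
    case True
    then have "(x-\<mu>)\<^sup>2 \<le> r\<^sup>2" by (auto intro!: power2_le_iff_abs_le[THEN iffD2] simp: abs_le_iff)
    then have "((x-\<mu>)\<^sup>2 - r\<^sup>2) * (g x - b) \<ge> 0" using b(2)[of x]
      by (intro mult_nonpos_nonpos) auto
    with True show ?thesis by (simp add: algebra_simps)
  next
    case False
    then have "r \<le> \<bar>x-\<mu>\<bar>" by auto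
    then have "r\<^sup>2 \<le> \<bar>x-\<mu>\<bar>\<^sup>2" using r by (intro power_mono) auto
    then have "r\<^sup>2 \<le> (x-\<mu>)\<^sup>2" by simp
    then have "r\<^sup>2 * g x \<le> g x * (x - \<mu>)\<^sup>2" using gnn[of x] by (simp add: mult.commute mult_left_mono)
    with False show ?thesis by simp
  qed
  have "b * (2*r^3/3) + r\<^sup>2 - r\<^sup>2 * b * (2*r) = 1/(12*b\<^sup>2)"
    using b unfolding r_def by (simp add: field_simps power2_eq_square power3_eq_cube)
  then have "1/(12*b\<^sup>2) \<le> (\<integral>x. g x * (x - \<mu>)\<^sup>2 \<partial>lborel)"
    using integral_mono[OF iQ i2' Qle] Qv by simp
  then show ?thesis using True v unfolding var_ext_def D_def \<mu>_def by simp
qed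



lemma var_upper:
  fixes g :: "real \<Rightarrow> real" and t K :: real
  assumes gm[measurable]: "g \<in> borel_measurable borel" and gnn: "\<And>x. 0 \<le> g x"
    and P: "prob_space (density lborel (\<lambda>x. ennreal (g x)))"
    and K: "(\<integral>\<^sup>+x. ennreal (g x * (x - t)\<^sup>2) \<partial>lborel) \<le> ennreal K" "0 \<le> K"
  shows "var_ext (density lborel (\<lambda>x. ennreal (g x))) (\<lambda>x. x) \<le> ereal K"
proof -
  define D where "D = density lborel (\<lambda>x. ennreal (g x))"
  interpret D: prob_space D using P by (simp add: D_def)
  have il: "integrable lborel (\<lambda>x. g x * (x - t)\<^sup>2)"
    by (rule integrableI_nonneg) (use K gnn in \<open>auto simp: top.not_eq_extremum intro: le_less_trans\<close>)
  have ival: "(\<integral>x. g x * (x - t)\<^sup>2 \<partial>lborel) \<le> K"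
  proof -
    have "ennreal (\<integral>x. g x * (x - t)\<^sup>2 \<partial>lborel) = (\<integral>\<^sup>+x. ennreal (g x * (x - t)\<^sup>2) \<partial>lborel)"
      using il gnn by (subst nn_integral_eq_integral) auto
    with K show ?thesis by (metis ennreal_le_iff)
  qed
  have it: "integrable D (\<lambda>x. (x - t)\<^sup>2)"
    unfolding D_def using il by (subst integrable_density) (auto simp: gnn)
  have Dt: "(\<integral>x. (x - t)\<^sup>2 \<partial>D) = (\<integral>x. g x * (x - t)\<^sup>2 \<partial>lborel)"
    unfolding D_def by (subst integral_density) (auto simp: gnn)
  have i1': "integrable D (\<lambda>x. x - t)"
    by (rule D.square_integrable_imp_integrable) (use it in \<open>auto simp: D_def\<close>)
  have i1: "integrable D (\<lambda>x. x)"
  proof -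
    have "integrable D (\<lambda>x. (x - t) + t)" using Bochner_Integration.integrable_add[OF i1' D.integrable_const[of t]] by simp
    then show ?thesis by simp
  qed
  have eq: "(\<lambda>x. x\<^sup>2) = (\<lambda>x. (x - t)\<^sup>2 + 2*t*x - t\<^sup>2)"
    by (auto simp: power2_eq_square algebra_simps)
  have sq: "integrable D (\<lambda>x. x\<^sup>2)"
    unfolding eq using it i1 by auto
  define \<mu> where "\<mu> = (\<integral>x. x \<partial>D)"
  have eq2: "(\<lambda>x. (x - \<mu>)\<^sup>2) = (\<lambda>x. (x - t)\<^sup>2 - (2*(\<mu>-t)*x - (\<mu>\<^sup>2 - t\<^sup>2)))"
    by (auto simp: power2_eq_square algebra_simps)
  have "(\<integral>x. (x - \<mu>)\<^sup>2 \<partial>D) = (\<integral>x. (x - t)\<^sup>2 \<partial>D) - (2*(\<mu>-t)*\<mu> - (\<mu>\<^sup>2 - t\<^sup>2))"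
    unfolding eq2 using it i1 D.prob_space
    by (simp add: Bochner_Integration.integral_diff \<mu>_def)
  also have "\<dots> = (\<integral>x. (x - t)\<^sup>2 \<partial>D) - (\<mu> - t)\<^sup>2"
    by (simp add: power2_eq_square algebra_simps)
  also have "\<dots> \<le> K" using Dt ival by (smt (verit) zero_le_power2)
  finally show ?thesis using sq unfolding var_ext_def D_def \<mu>_def by simp
qed


lemma var_distr:
  fixes Y :: "'a \<Rightarrow> real"
  assumes [measurable]: "Y \<in> measurable N borel"
  shows "var_ext N Y = var_ext (distr N lborel Y) (\<lambda>x. x)"
  unfolding var_ext_def
  by (simp add: integrable_distr_eq integral_distr)

lemma var_ext_nonneg: "0 \<le> var_ext N Y"
  unfolding var_ext_def by simp


context
  fixes M :: "'a measure" and X :: "'a \<Rightarrow> real" and f :: "real \<Rightarrow> real"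
  assumes P: "prob_space M"
    and D: "distributed M lborel X (\<lambda>x. ennreal (f x))"
    and cont: "continuous_on UNIV f"
    and nn: "\<And>x. f x \<ge> 0"
begin

lemma Xm[measurable]: "X \<in> measurable M borel"
  using distributed_measurable[OF D] by simp

lemma fm[measurable]: "f \<in> borel_measurable borel"
  using cont by (rule borel_measurable_continuous_onI)

lemma emeas: "B \<in> sets borel \<Longrightarrow>
   emeasure M {\<omega>\<in>space M. X \<omega> \<in> B} = (\<integral>\<^sup>+x. ennreal (f x * indicator B x) \<partial>lborel)"
proof -
  assume B: "B \<in> sets borel"
  have "{\<omega>\<in>space M. X \<omega> \<in> B} = X -` B \<inter> space M" by auto
  then show ?thesis using distributed_emeasure[OF D, of B] B
    by (auto simp: nn intro!: nn_integral_cong split: split_indicator)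
qed

lemma f_int: "integrable lborel f"
proof -
  interpret prob_space M by (rule P)
  have "emeasure M {\<omega>\<in>space M. X \<omega> \<in> UNIV} = 1" using emeasure_space_1 by simp
  then have "(\<integral>\<^sup>+x. ennreal (f x) \<partial>lborel) = 1" using emeas[of UNIV] by simp
  then show ?thesis by (intro integrableI_nonneg) (auto simp: nn)
qed

lemma f_int_ind: "integrable lborel (\<lambda>x. f x * indicator B x)" if "B \<in> sets borel"
  using f_int that by (intro integrable_real_mult_indicator) auto

lemma S_int: "surv_rv M X x = (\<integral>y. f y * indicator {x<..} y \<partial>lborel)"
proof -
  interpret prob_space M by (rule P)
  have "{\<omega>\<in>space M. X \<omega> > x} = {\<omega>\<in>space M. X \<omega> \<in> {x<..}}" by auto
  then have "surv_rv M X x = enn2real (emeasure M {\<omega>\<in>space M. X \<omega> \<in> {x<..}})"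
    unfolding surv_rv_def by (simp add: measure_def)
  also have "\<dots> = enn2real (\<integral>\<^sup>+y. ennreal (f y * indicator {x<..} y) \<partial>lborel)"
    using emeas[of "{x<..}"] by simp
  also have "\<dots> = (\<integral>y. f y * indicator {x<..} y \<partial>lborel)"
    by (subst integral_eq_nn_integral) (auto simp: nn)
  finally show ?thesis .
qed

lemma S_diff: "a \<le> b \<Longrightarrow> surv_rv M X a - surv_rv M X b = integral {a..b} f"
proof -
  assume ab: "a \<le> b"
  have "surv_rv M X a - surv_rv M X b = (\<integral>y. f y * indicator {a<..} y - f y * indicator {b<..} y \<partial>lborel)"
    unfolding S_int by (simp add: Bochner_Integration.integral_diff f_int_ind)
  also have "\<dots> = (\<integral>y. f y * indicator {a..b} y \<partial>lborel)"
  proof (rule integral_cong_AE)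
    show "AE y in lborel. f y * indicator {a<..} y - f y * indicator {b<..} y = f y * indicator {a..b} y"
      using AE_lborel_singleton[of a] by eventually_elim (use ab in \<open>auto split: split_indicator\<close>)
  qed auto
  also have "\<dots> = (LINT y : {a..b} | lborel. f y)"
    by (simp add: set_lebesgue_integral_def mult.commute)
  also have "\<dots> = integral {a..b} f"
  proof (rule set_borel_integral_eq_integral(2))
    show "set_integrable lborel {a..b} f"
      unfolding set_integrable_def using f_int_ind[of "{a..b}"] by (simp add: mult.commute)
  qed
  finally show ?thesis .
qed

lemma S_mono: "a \<le> b \<Longrightarrow> surv_rv M X b \<le> surv_rv M X a"
proof -
  assume ab: "a \<le> b"
  have "0 \<le> integral {a..b} f"
    by (rule integral_nonneg) (auto intro!: integrable_continuous_interval continuous_on_subset[OF cont] simp: nn)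
  then show ?thesis using S_diff[OF ab] by simp
qed

lemma S_nonneg: "0 \<le> surv_rv M X x"
  unfolding surv_rv_def by simp

lemma S_le1: "surv_rv M X x \<le> 1"
  using P unfolding surv_rv_def by (simp add: prob_space.prob_le_1)

lemma S_deriv: "(surv_rv M X has_real_derivative (- f x)) (at x)"
proof -
  define a where "a = x - 1"
  have "((\<lambda>u. integral {a..u} f) has_vector_derivative f x) (at x within {a..x+1})"
    by (rule integral_has_vector_derivative) (auto simp: a_def intro: continuous_on_subset[OF cont])
  then have "((\<lambda>u. integral {a..u} f) has_real_derivative f x) (at x)"
    by (simp add: at_within_Icc_at a_def has_real_derivative_iff_has_vector_derivative)
  then have d: "((\<lambda>u. surv_rv M X a - integral {a..u} f) has_real_derivative (- f x)) (at x)"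
    by (intro derivative_eq_intros) auto
  show ?thesis
  proof (rule has_field_derivative_transform_within_open[OF d, of "{a<..}"])
    show "x \<in> {a<..}" by (simp add: a_def)
    fix y assume "y \<in> {a<..}"
    then show "surv_rv M X a - integral {a..y} f = surv_rv M X y" using S_diff[of a y] by simp
  qed auto
qed

lemma S_cont: "continuous_on UNIV (surv_rv M X)"
  using S_deriv by (meson DERIV_isCont continuous_at_imp_continuous_on)

lemma S_zero: "surv_rv M X x = 0 \<Longrightarrow> f x = 0"
proof -
  assume "surv_rv M X x = 0"
  then have "\<forall>y. \<bar>x - y\<bar> < 1 \<longrightarrow> surv_rv M X x \<le> surv_rv M X y" using S_nonneg by simp
  from DERIV_local_min[OF S_deriv _ this] show ?thesis by simp
qed

lemma cond_distr:
  assumes pos: "0 < surv_rv M X t"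
  shows "distr (uniform_measure M {\<omega>\<in>space M. X \<omega> > t}) lborel X
     = density lborel (\<lambda>y. ennreal (f y * indicator {t<..} y / surv_rv M X t))"
proof -
  interpret prob_space M by (rule P)
  define A where "A = {\<omega>\<in>space M. X \<omega> > t}"
  define p where "p = surv_rv M X t"
  define k where "k = (\<lambda>y. ennreal (indicator {t<..} y / p))"
  have km[measurable]: "k \<in> borel_measurable borel" unfolding k_def by measurable
  have Am[measurable]: "A \<in> sets M" unfolding A_def by measurable
  have eA: "emeasure M A = ennreal p"
    unfolding p_def surv_rv_def A_def by (simp add: emeasure_eq_measure)
  have p: "0 < p" using pos by (simp add: p_def)
  have eA': "emeasure M {\<omega>\<in>space M. X \<omega> > t} = ennreal p" using eA by (simp add: A_def)
  have d1: "1 / ennreal p = ennreal (1/p)" using divide_ennreal[of 1 p] p by simp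
  have U: "uniform_measure M A = density M (\<lambda>\<omega>. k (X \<omega>))"
    unfolding uniform_measure_def
  proof (rule density_cong)
    show "AE x in M. indicator A x / emeasure M A = k (X x)"
      using p by (auto simp: eA' d1 k_def A_def divide_ennreal split: split_indicator)
  qed (auto simp: k_def)
  have "distr (uniform_measure M A) lborel X = distr (density M (\<lambda>\<omega>. k (X \<omega>))) lborel X"
    by (simp add: U)
  also have "\<dots> = density (distr M lborel X) k"
    by (rule density_distr[symmetric]) (auto simp: km)
  also have "\<dots> = density (density lborel (\<lambda>x. ennreal (f x))) k"
    by (simp add: distributed_distr_eq_density[OF D])
  also have "\<dots> = density lborel (\<lambda>x. ennreal (f x) * k x)"
    by (rule density_density_eq) auto
  also have "\<dots> = density lborel (\<lambda>y. ennreal (f y * indicator {t<..} y / surv_rv M X t))"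
    by (rule density_cong) (auto simp: k_def p_def ennreal_mult'[symmetric] nn)
  finally show ?thesis unfolding A_def .
qed

lemma tail_bound:
  assumes c: "0 < c" and fc: "\<And>x. x \<ge> t \<Longrightarrow> c * surv_rv M X x \<le> f x" and T: "t \<le> T"
  shows "(\<integral>\<^sup>+y. ennreal (f y * (y - t)\<^sup>2 * indicator {t..T} y) \<partial>lborel) \<le> ennreal (2 * surv_rv M X t / c\<^sup>2)"
proof -
  define S where "S = surv_rv M X"
  define q where "q = (\<lambda>u::real. u\<^sup>2 + 2*u/c + 2/c\<^sup>2)"
  define \<Phi> where "\<Phi> = (\<lambda>x. - (S x * q (x - t)))"
  define \<phi> where "\<phi> = (\<lambda>x. f x * q (x - t) - S x * (2*(x - t) + 2/c))"
  have dS: "(S has_real_derivative - f x) (at x)" for x unfolding S_def by (rule S_deriv)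
  have dP: "(\<Phi> has_real_derivative \<phi> x) (at x)" for x
  proof -
    have dq: "((\<lambda>x. q (x - t)) has_real_derivative (2*(x-t) + 2/c)) (at x)"
      unfolding q_def using c by (auto intro!: derivative_eq_intros simp: field_simps power2_eq_square)
    have "((\<lambda>x. - (S x * q (x - t))) has_real_derivative - (- f x * q (x - t) + (2*(x-t) + 2/c) * S x)) (at x)"
      by (rule DERIV_minus[OF DERIV_mult[OF dS dq]])
    then show ?thesis unfolding \<Phi>_def \<phi>_def
      by (rule DERIV_cong) (simp add: algebra_simps)
  qed
  have cf: "isCont f x" for x using cont by (simp add: continuous_on_eq_continuous_at)
  have cS: "isCont S x" for x using dS by (rule DERIV_isCont)
  have cp: "isCont \<phi> x" for x unfolding \<phi>_def q_def using cf cS c by (intro continuous_intros) auto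
  have hb: "has_bochner_integral lborel (\<lambda>x. \<phi> x * indicator {t..T} x) (\<Phi> T - \<Phi> t)"
    by (rule has_bochner_integral_FTC_Icc_real[OF T dP cp])
  have le: "f x * (x - t)\<^sup>2 \<le> \<phi> x" if "t \<le> x" for x
  proof -
    have w: "0 \<le> 2*(x-t)/c + 2/c\<^sup>2" using that c by auto
    have "c * S x * (2*(x-t)/c + 2/c\<^sup>2) \<le> f x * (2*(x-t)/c + 2/c\<^sup>2)"
      by (rule mult_right_mono[OF _ w]) (use fc[OF that] in \<open>simp add: S_def\<close>)
    moreover have "c * S x * (2*(x-t)/c + 2/c\<^sup>2) = S x * (2*(x - t) + 2/c)"
      using c by (simp add: field_simps power2_eq_square)
    ultimately show ?thesis unfolding \<phi>_def q_def by (simp add: algebra_simps)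
  qed
  have pn: "0 \<le> \<phi> x * indicator {t..T} x" for x
    using le[of x] nn[of x] by (auto split: split_indicator intro: order_trans[rotated])
  have "(\<integral>\<^sup>+y. ennreal (f y * (y - t)\<^sup>2 * indicator {t..T} y) \<partial>lborel)
      \<le> (\<integral>\<^sup>+y. ennreal (\<phi> y * indicator {t..T} y) \<partial>lborel)"
    by (intro nn_integral_mono ennreal_leI) (auto simp: le split: split_indicator)
  also have "\<dots> = ennreal (\<Phi> T - \<Phi> t)"
    using hb pn by (subst nn_integral_eq_integral)
      (auto simp: has_bochner_integral_integral_eq intro: integrable.intros)
  also have "\<dots> \<le> ennreal (2 * S t / c\<^sup>2)"
  proof (rule ennreal_leI)
    have "0 \<le> S T * q (T - t)" unfolding q_def using c T S_nonneg[of T]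
      by (auto simp: S_def intro!: mult_nonneg_nonneg add_nonneg_nonneg)
    then show "\<Phi> T - \<Phi> t \<le> 2 * S t / c\<^sup>2" unfolding \<Phi>_def q_def by (simp add: mult.commute)
  qed
  finally show ?thesis by (simp add: S_def)
qed

lemma tail_total:
  assumes c: "0 < c" and fc: "\<And>x. x \<ge> t \<Longrightarrow> c * surv_rv M X x \<le> f x" and pos: "0 < surv_rv M X t"
  shows "(\<integral>\<^sup>+y. ennreal (f y * indicator {t<..} y / surv_rv M X t * (y - t)\<^sup>2) \<partial>lborel) \<le> ennreal (2 / c\<^sup>2)"
proof -
  define p where "p = surv_rv M X t"
  have p: "0 < p" using pos by (simp add: p_def)
  define F where "F = (\<lambda>n::nat. \<lambda>y. ennreal (f y * (y - t)\<^sup>2 * indicator {t..t + real n} y))"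
  have inc: "incseq F"
    unfolding F_def incseq_def le_fun_def
    by (auto intro!: ennreal_leI mult_left_mono simp: nn split: split_indicator)
  have sup: "(SUP n. F n y) = ennreal (f y * (y - t)\<^sup>2 * indicator {t..} y)" for y
  proof (rule antisym)
    show "(SUP n. F n y) \<le> ennreal (f y * (y - t)\<^sup>2 * indicator {t..} y)"
      by (rule SUP_least) (auto simp: F_def nn intro!: ennreal_leI split: split_indicator)
    obtain n :: nat where "y - t \<le> real n" using real_arch_simple by blast
    then have "F n y = ennreal (f y * (y - t)\<^sup>2 * indicator {t..} y)"
      by (auto simp: F_def split: split_indicator)
    then show "ennreal (f y * (y - t)\<^sup>2 * indicator {t..} y) \<le> (SUP n. F n y)"
      by (metis UNIV_I SUP_upper)
  qed
  have "(\<integral>\<^sup>+y. ennreal (f y * (y - t)\<^sup>2 * indicator {t..} y) \<partial>lborel) = (\<integral>\<^sup>+y. (SUP n. F n y) \<partial>lborel)"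
    by (simp add: sup)
  also have "\<dots> = (SUP n. integral\<^sup>N lborel (F n))"
    by (rule nn_integral_monotone_convergence_SUP[OF inc]) (auto simp: F_def)
  also have "\<dots> \<le> ennreal (2 * p / c\<^sup>2)"
    by (rule SUP_least) (unfold F_def p_def, rule tail_bound[OF c fc], auto)
  finally have main: "(\<integral>\<^sup>+y. ennreal (f y * (y - t)\<^sup>2 * indicator {t..} y) \<partial>lborel) \<le> ennreal (2 * p / c\<^sup>2)" .
  have "(\<integral>\<^sup>+y. ennreal (f y * indicator {t<..} y / p * (y - t)\<^sup>2) \<partial>lborel)
      \<le> (\<integral>\<^sup>+y. ennreal (1/p) * ennreal (f y * (y - t)\<^sup>2 * indicator {t..} y) \<partial>lborel)"
    using p by (intro nn_integral_mono) (auto simp: ennreal_mult'[symmetric] nn split: split_indicator)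
  also have "\<dots> = ennreal (1/p) * (\<integral>\<^sup>+y. ennreal (f y * (y - t)\<^sup>2 * indicator {t..} y) \<partial>lborel)"
    by (rule nn_integral_cmult) auto
  also have "\<dots> \<le> ennreal (1/p) * ennreal (2 * p / c\<^sup>2)"
    by (rule mult_left_mono[OF main]) simp
  also have "\<dots> = ennreal (2 / c\<^sup>2)"
    using p by (simp add: ennreal_mult'[symmetric])
  finally show ?thesis by (simp add: p_def)
qed


lemma right_tail:
  assumes pos: "0 < surv_rv M X t"
  shows "inverse (12 * (SUP x \<in> {x. x \<ge> t \<and> surv_rv M X x > 0}. ereal ((f x / surv_rv M X x)\<^sup>2)))
          \<le> var_ext (uniform_measure M {\<omega> \<in> space M. X \<omega> > t}) X
      \<and> var_ext (uniform_measure M {\<omega> \<in> space M. X \<omega> > t}) X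
          \<le> 4 * inverse (INF x \<in> {x. x \<ge> t \<and> surv_rv M X x > 0}. ereal ((f x / surv_rv M X x)\<^sup>2))"
proof -
  interpret prob_space M by (rule P)
  define S where "S = surv_rv M X"
  define H where "H = {x. x \<ge> t \<and> S x > 0}"
  define A where "A = {\<omega> \<in> space M. X \<omega> > t}"
  define N where "N = uniform_measure M A"
  define g where "g = (\<lambda>y. f y * indicator {t<..} y / S t)"
  have Sp: "0 < S t" using pos by (simp add: S_def)
  have Am[measurable]: "A \<in> sets M" unfolding A_def by measurable
  have eA: "emeasure M A = ennreal (S t)"
    unfolding S_def surv_rv_def A_def by (simp add: emeasure_eq_measure)
  have PN: "prob_space N" unfolding N_def
    by (rule prob_space_uniform_measure) (use Sp eA in auto)
  have XN: "X \<in> measurable N borel" unfolding N_def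
    by (simp add: measurable_cong_sets[OF sets_uniform_measure refl])
  have gm[measurable]: "g \<in> borel_measurable borel" unfolding g_def by measurable
  have gnn: "0 \<le> g y" for y unfolding g_def using Sp nn[of y] by (auto split: split_indicator)
  have dN: "distr N lborel X = density lborel (\<lambda>y. ennreal (g y))"
    unfolding N_def A_def g_def S_def by (rule cond_distr[OF pos])
  have PD: "prob_space (density lborel (\<lambda>y. ennreal (g y)))"
    using prob_space.prob_space_distr[OF PN, of X lborel] XN dN by simp
  have V: "var_ext N X = var_ext (density lborel (\<lambda>y. ennreal (g y))) (\<lambda>x. x)"
    using var_distr[OF XN] dN by simp
  have tH: "t \<in> H" unfolding H_def using Sp by simp
  have hnn: "0 \<le> f x / S x" for x using nn[of x] S_nonneg[of x] by (simp add: S_def)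
  have glb: "g y \<le> b" if b: "0 < b" "\<And>x. x \<in> H \<Longrightarrow> f x / S x \<le> b" for b y
  proof (cases "t < y")
    case False then show ?thesis using b by (simp add: g_def)
  next
    case True
    show ?thesis
    proof (cases "S y = 0")
      case True then show ?thesis using S_zero[of y] b by (simp add: g_def S_def)
    next
      case False
      then have Sy: "0 < S y" using S_nonneg[of y] by (simp add: S_def)
      have "S y \<le> S t" using S_mono[of t y] \<open>t < y\<close> by (simp add: S_def)
      then have "f y / S t \<le> f y / S y" using Sy nn[of y] by (intro divide_left_mono) auto
      also have "\<dots> \<le> b" using b(2)[of y] Sy \<open>t < y\<close> by (simp add: H_def)
      finally show ?thesis using \<open>t < y\<close> by (simp add: g_def)
    qed
  qed
  have vlow: "ereal (1/(12*b\<^sup>2)) \<le> var_ext N X" if b: "0 < b" "\<And>x. x \<in> H \<Longrightarrow> f x / S x \<le> b" for b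
    unfolding V by (rule var_lower[OF gm gnn PD b(1)]) (rule glb[OF b])
  have low: "inverse (12 * (SUP x \<in> H. ereal ((f x / S x)\<^sup>2))) \<le> var_ext N X"
  proof -
    define \<Sigma> where "\<Sigma> = (SUP x \<in> H. ereal ((f x / S x)\<^sup>2))"
    have s0: "0 \<le> \<Sigma>" unfolding \<Sigma>_def using tH by (meson SUP_upper2 ereal_less_eq(5) zero_le_power2)
    show ?thesis
    proof (cases \<Sigma>)
      case PInf then show ?thesis using var_ext_nonneg[of N X] by (simp add: \<Sigma>_def)
    next
      case MInf then show ?thesis using s0 by simp
    next
      case (real s)
      have s: "0 \<le> s" using s0 real by simp
      have hb: "f x / S x \<le> sqrt s" if "x \<in> H" for x
      proof -
        have "ereal ((f x / S x)\<^sup>2) \<le> \<Sigma>" unfolding \<Sigma>_def using that by (rule SUP_upper)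
        then have "(f x / S x)\<^sup>2 \<le> s" using real by simp
        then show ?thesis using hnn[of x] by (simp add: real_le_rsqrt)
      qed
      show ?thesis
      proof (cases "s = 0")
        case False
        then have sp: "0 < s" using s by simp
        have "ereal (1/(12*(sqrt s)\<^sup>2)) \<le> var_ext N X"
          by (rule vlow) (use sp hb in auto)
        moreover have "inverse (12 * \<Sigma>) = ereal (1/(12*(sqrt s)\<^sup>2))"
          using real s sp by (simp add: inverse_eq_divide)
        ultimately show ?thesis by (simp add: \<Sigma>_def)
      next
        case True
        have "var_ext N X = \<infinity>"
        proof (rule ccontr)
          assume ni: "var_ext N X \<noteq> \<infinity>"
          have "0 \<le> var_ext N X" by (rule var_ext_nonneg)
          then obtain v where v: "var_ext N X = ereal v" using ni by (cases "var_ext N X") auto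
          define b where "b = sqrt (1/(12*(\<bar>v\<bar>+1)))"
          have bp: "0 < b" unfolding b_def by (simp add: add_pos_nonneg)
          have "ereal (1/(12*b\<^sup>2)) \<le> var_ext N X"
          proof (rule vlow[OF bp])
            fix x assume "x \<in> H"
            have "f x / S x \<le> 0" using hb[OF \<open>x \<in> H\<close>] True by simp
            then show "f x / S x \<le> b" using bp by simp
          qed
          moreover have "1/(12*b\<^sup>2) = \<bar>v\<bar> + 1" unfolding b_def
            by (simp add: add_pos_nonneg)
          ultimately show False using v by simp
        qed
        then show ?thesis by simp
      qed
    qed
  qed
  have up: "var_ext N X \<le> 4 * inverse (INF x \<in> H. ereal ((f x / S x)\<^sup>2))"
  proof -
    define I where "I = (INF x \<in> H. ereal ((f x / S x)\<^sup>2))"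
    have i0: "0 \<le> I" unfolding I_def by (rule INF_greatest) simp
    have iT: "I \<le> ereal ((f t / S t)\<^sup>2)" unfolding I_def using tH by (rule INF_lower)
    obtain i where real: "I = ereal i" using i0 iT by (cases I) auto
    have i: "0 \<le> i" using i0 real by simp
    show ?thesis
    proof (cases "i = 0")
      case True then show ?thesis using real by (simp add: I_def)
    next
      case False
      then have ip: "0 < i" using i by simp
      define c where "c = sqrt i"
      have c: "0 < c" using ip by (simp add: c_def)
      have fc: "c * surv_rv M X x \<le> f x" if "x \<ge> t" for x
      proof (cases "S x = 0")
        case True then show ?thesis using nn[of x] by (simp add: S_def)
      next
        case False
        then have Sx: "0 < S x" using S_nonneg[of x] by (simp add: S_def)
        then have "x \<in> H" using that by (simp add: H_def)
        then have "I \<le> ereal ((f x / S x)\<^sup>2)" unfolding I_def by (rule INF_lower)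
        then have "i \<le> (f x / S x)\<^sup>2" using real by simp
        then have "c \<le> f x / S x" unfolding c_def using hnn[of x] by (simp add: real_le_lsqrt)
        then show ?thesis using Sx by (simp add: S_def field_simps)
      qed
      have K: "(\<integral>\<^sup>+y. ennreal (g y * (y - t)\<^sup>2) \<partial>lborel) \<le> ennreal (2 / c\<^sup>2)"
        unfolding g_def S_def by (rule tail_total[OF c fc pos])
      have "var_ext N X \<le> ereal (2 / c\<^sup>2)"
        unfolding V by (rule var_upper[OF gm gnn PD K]) simp
      also have "\<dots> \<le> 4 * inverse I"
        using real ip by (simp add: c_def inverse_eq_divide divide_right_mono)
      finally show ?thesis by (simp add: I_def)
    qed
  qed
  show ?thesis using low up by (simp add: N_def A_def H_def S_def)
qed

end


lemma nn_integral_reflect: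
  fixes h :: "real \<Rightarrow> ennreal"
  assumes [measurable]: "h \<in> borel_measurable borel"
  shows "(\<integral>\<^sup>+x. h x \<partial>lborel) = (\<integral>\<^sup>+x. h (- x) \<partial>lborel)"
proof -
  have "(\<integral>\<^sup>+x. h x \<partial>lborel) = (\<integral>\<^sup>+x. h x \<partial>distr lborel borel uminus)"
    by (simp add: lborel_distr_uminus)
  also have "\<dots> = (\<integral>\<^sup>+x. h (- x) \<partial>lborel)"
    by (subst nn_integral_distr) auto
  finally show ?thesis .
qed

lemma neg_distributed:
  fixes X :: "'a \<Rightarrow> real"
  assumes D: "distributed M lborel X (\<lambda>x. ennreal (f x))" and fm[measurable]: "f \<in> borel_measurable borel"
  shows "distributed M lborel (\<lambda>\<omega>. - X \<omega>) (\<lambda>x. ennreal (f (- x)))"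
  unfolding distributed_def
proof (intro conjI)
  have Xm[measurable]: "X \<in> measurable M borel" using distributed_measurable[OF D] by simp
  show "(\<lambda>x. ennreal (f (- x))) \<in> borel_measurable lborel" by simp
  show "(\<lambda>\<omega>. - X \<omega>) \<in> measurable M lborel" by simp
  show "distr M lborel (\<lambda>\<omega>. - X \<omega>) = density lborel (\<lambda>x. ennreal (f (- x)))"
  proof (rule measure_eqI)
    fix B assume B: "B \<in> sets (distr M lborel (\<lambda>\<omega>. - X \<omega>))"
    then have Bm[measurable]: "B \<in> sets borel" by simp
    have "emeasure (distr M lborel (\<lambda>\<omega>. - X \<omega>)) B = emeasure M (X -` (uminus -` B) \<inter> space M)"
      by (subst emeasure_distr) (auto intro!: arg_cong[where f="emeasure M"])
    also have "\<dots> = (\<integral>\<^sup>+x. ennreal (f x) * indicator (uminus -` B) x \<partial>lborel)"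
    proof (rule distributed_emeasure[OF D])
      have "uminus -` B \<inter> space borel \<in> sets borel"
        by (rule measurable_sets[of uminus borel borel]) auto
      then show "uminus -` B \<in> sets lborel" by simp
    qed
    also have "\<dots> = (\<integral>\<^sup>+x. ennreal (f (- x)) * indicator (uminus -` B) (- x) \<partial>lborel)"
      by (rule nn_integral_reflect) simp
    also have "\<dots> = emeasure (density lborel (\<lambda>x. ennreal (f (- x)))) B"
      by (subst emeasure_density) (auto intro!: nn_integral_cong split: split_indicator)
    finally show "emeasure (distr M lborel (\<lambda>\<omega>. - X \<omega>)) B = emeasure (density lborel (\<lambda>x. ennreal (f (- x)))) B" .
  qed simp
qed

lemma var_ext_uminus: "var_ext N (\<lambda>\<omega>. - Y \<omega>) = var_ext N Y"
  unfolding var_ext_def by (simp add: power2_commute algebra_simps)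

lemma surv_neg:
  assumes D: "distributed M lborel X (\<lambda>x. ennreal (f x))" and fnn: "\<And>x. 0 \<le> f x"
  shows "surv_rv M (\<lambda>\<omega>. - X \<omega>) y = cdf_rv M X (- y)"
proof -
  have Xm[measurable]: "X \<in> measurable M borel" using distributed_measurable[OF D] by simp
  have fm[measurable]: "f \<in> borel_measurable borel"
    using distributed_real_measurable[OF _ D] fnn by simp
  have null: "{\<omega>\<in>space M. X \<omega> = - y} \<in> null_sets M"
  proof -
    have "{\<omega>\<in>space M. X \<omega> = - y} = X -` {- y} \<inter> space M" by auto
    moreover have "emeasure M (X -` {- y} \<inter> space M) = 0"
    proof -
      have "emeasure M (X -` {- y} \<inter> space M) = (\<integral>\<^sup>+x. ennreal (f x) * indicator {- y} x \<partial>lborel)"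
        by (rule distributed_emeasure[OF D]) simp
      also have "\<dots> = 0"
      proof -
        have "AE x in lborel. ennreal (f x) * indicator {- y} x = 0"
          using AE_lborel_singleton[of "- y"] by eventually_elim auto
        then show ?thesis by (subst nn_integral_0_iff_AE) auto
      qed
      finally show ?thesis .
    qed
    ultimately show ?thesis by (auto intro: null_setsI)
  qed
  have "{\<omega>\<in>space M. X \<omega> \<le> - y} = {\<omega>\<in>space M. - X \<omega> > y} \<union> {\<omega>\<in>space M. X \<omega> = - y}" by auto
  then have "cdf_rv M X (- y) = measure M ({\<omega>\<in>space M. - X \<omega> > y} \<union> {\<omega>\<in>space M. X \<omega> = - y})"
    unfolding cdf_rv_def by simp
  also have "\<dots> = measure M {\<omega>\<in>space M. - X \<omega> > y}"
    by (rule measure_Un_null_set[OF _ null]) measurable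
  finally show ?thesis unfolding surv_rv_def by simp
qed

theorem lemma3p3:
  fixes M :: "'a measure" and X :: "'a \<Rightarrow> real" and f :: "real \<Rightarrow> real"
  assumes "prob_space M"
    and "distributed M lborel X (\<lambda>x. ennreal (f x))"
    and "continuous_on UNIV f"
    and "\<And>x. f x \<ge> 0"
  shows
    "(\<forall>t. t \<ge> quantile_rv M X (1/2) \<and> surv_rv M X t > 0 \<longrightarrow>
        inverse (12 * (SUP x \<in> {x. x \<ge> t \<and> surv_rv M X x > 0}. ereal ((hazard2 M X f x)\<^sup>2)))
          \<le> var_ext (uniform_measure M {\<omega> \<in> space M. X \<omega> > t}) X
      \<and> var_ext (uniform_measure M {\<omega> \<in> space M. X \<omega> > t}) X
          \<le> 4 * inverse (INF x \<in> {x. x \<ge> t \<and> surv_rv M X x > 0}. ereal ((hazard2 M X f x)\<^sup>2)))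
   \<and> (\<forall>t. t < quantile_rv M X (1/2) \<and> cdf_rv M X t > 0 \<longrightarrow>
        inverse (12 * (SUP x \<in> {x. x \<le> t \<and> cdf_rv M X x > 0}. ereal ((hazard2 M X f x)\<^sup>2)))
          \<le> var_ext (uniform_measure M {\<omega> \<in> space M. X \<omega> < t}) X
      \<and> var_ext (uniform_measure M {\<omega> \<in> space M. X \<omega> < t}) X
          \<le> 4 * inverse (INF x \<in> {x. x \<le> t \<and> cdf_rv M X x > 0}. ereal ((hazard2 M X f x)\<^sup>2)))"
proof (intro conjI allI impI; elim conjE)
  note P = assms(1) and D = assms(2) and cont = assms(3) and nn = assms(4)
  have fm[measurable]: "f \<in> borel_measurable borel" using cont by (rule borel_measurable_continuous_onI)
  {
    fix t assume q: "quantile_rv M X (1/2) \<le> t" and pos: "0 < surv_rv M X t"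
    have hz: "(SUP x \<in> {x. x \<ge> t \<and> surv_rv M X x > 0}. ereal ((hazard2 M X f x)\<^sup>2))
        = (SUP x \<in> {x. x \<ge> t \<and> surv_rv M X x > 0}. ereal ((f x / surv_rv M X x)\<^sup>2))"
         "(INF x \<in> {x. x \<ge> t \<and> surv_rv M X x > 0}. ereal ((hazard2 M X f x)\<^sup>2))
        = (INF x \<in> {x. x \<ge> t \<and> surv_rv M X x > 0}. ereal ((f x / surv_rv M X x)\<^sup>2))"
      using q by (auto intro!: SUP_cong INF_cong simp: hazard2_def)
    note R = right_tail[OF P D cont nn pos]
    then show "inverse (12 * (SUP x \<in> {x. x \<ge> t \<and> surv_rv M X x > 0}. ereal ((hazard2 M X f x)\<^sup>2)))
          \<le> var_ext (uniform_measure M {\<omega> \<in> space M. X \<omega> > t}) X"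
       "var_ext (uniform_measure M {\<omega> \<in> space M. X \<omega> > t}) X
          \<le> 4 * inverse (INF x \<in> {x. x \<ge> t \<and> surv_rv M X x > 0}. ereal ((hazard2 M X f x)\<^sup>2))"
      unfolding hz by auto
  }
  {
    fix t assume q: "t < quantile_rv M X (1/2)" and pos: "0 < cdf_rv M X t"
    define Y where "Y = (\<lambda>\<omega>. - X \<omega>)"
    define g where "g = (\<lambda>x. f (- x))"
    have DY: "distributed M lborel Y (\<lambda>x. ennreal (g x))"
      unfolding Y_def g_def by (rule neg_distributed[OF D fm])
    have cg: "continuous_on UNIV g" unfolding g_def
      by (rule continuous_on_compose2[OF cont]) (auto intro: continuous_intros)
    have gnn: "\<And>x. g x \<ge> 0" by (simp add: g_def nn)
    have SY: "surv_rv M Y y = cdf_rv M X (- y)" for y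
      unfolding Y_def by (rule surv_neg[OF D nn])
    have posY: "0 < surv_rv M Y (- t)" using pos by (simp add: SY)
    note R = right_tail[OF P DY cg gnn posY]
    have setY: "{y. - t \<le> y \<and> 0 < surv_rv M Y y} = uminus ` {x. x \<le> t \<and> 0 < cdf_rv M X x}"
    proof (rule set_eqI, rule iffI)
      fix y assume "y \<in> {y. - t \<le> y \<and> 0 < surv_rv M Y y}"
      then show "y \<in> uminus ` {x. x \<le> t \<and> 0 < cdf_rv M X x}"
        by (intro image_eqI[of _ _ "- y"]) (auto simp: SY)
    qed (auto simp: SY)
    have hz: "ereal ((g (- x) / surv_rv M Y (- x))\<^sup>2) = ereal ((hazard2 M X f x)\<^sup>2)"
      if "x \<le> t" for x
      using q that by (simp add: hazard2_def g_def SY)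
    have hS: "(SUP y \<in> {y. - t \<le> y \<and> 0 < surv_rv M Y y}. ereal ((g y / surv_rv M Y y)\<^sup>2))
        = (SUP x \<in> {x. x \<le> t \<and> cdf_rv M X x > 0}. ereal ((hazard2 M X f x)\<^sup>2))"
      unfolding setY image_image using hz by (intro SUP_cong) auto
    have hI: "(INF y \<in> {y. - t \<le> y \<and> 0 < surv_rv M Y y}. ereal ((g y / surv_rv M Y y)\<^sup>2))
        = (INF x \<in> {x. x \<le> t \<and> cdf_rv M X x > 0}. ereal ((hazard2 M X f x)\<^sup>2))"
      unfolding setY image_image using hz by (intro INF_cong) auto
    have U: "uniform_measure M {\<omega> \<in> space M. Y \<omega> > - t} = uniform_measure M {\<omega> \<in> space M. X \<omega> < t}"
      unfolding Y_def by (rule arg_cong[where f="uniform_measure M"]) auto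
    have V: "var_ext (uniform_measure M {\<omega> \<in> space M. X \<omega> < t}) Y = var_ext (uniform_measure M {\<omega> \<in> space M. X \<omega> < t}) X"
      unfolding Y_def by (rule var_ext_uminus)
    from R show "inverse (12 * (SUP x \<in> {x. x \<le> t \<and> cdf_rv M X x > 0}. ereal ((hazard2 M X f x)\<^sup>2)))
          \<le> var_ext (uniform_measure M {\<omega> \<in> space M. X \<omega> < t}) X"
       "var_ext (uniform_measure M {\<omega> \<in> space M. X \<omega> < t}) X
          \<le> 4 * inverse (INF x \<in> {x. x \<le> t \<and> cdf_rv M X x > 0}. ereal ((hazard2 M X f x)\<^sup>2))"
      unfolding hS hI U V by auto
  }
qed

end
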